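(* Let $I=(T,((U_1,S_1),\dots,(U_k,S_k)))$ be an instance of \textsc{Generalized Graphic Inverse Voronoi in Trees} in which $U_1,\dots,U_k$ are pairwise disjoint subsets of $V(T)$, each inducing a connected subtree of $T$. Let $n=|V(T)|$, let $0<\delta<\mathrm{res}'(I)/(6n)$ and $\delta'=\delta/(4n)$, and let $I'=(T',((U_1',S_1'),\dots,(U_k',S_k')))$ be the instance constructed below. Then the answer to $I$ is ``yes'' if and only if the answer to $I'$ is ``yes''.
   Context: \textsc{Generalized Graphic Inverse Voronoi in Trees}: input is a tree $T$ with positive edge-lengths $\lambda$ and pairs $(U_i,S_i)$, $i\in[k]$, of subsets of $V(T)$ with $U_1,\dots,U_k$ covering $V(T)$; the answer is ``yes'' if there are $s_1,\dots,s_k$ with $s_i\in S_i$ and $U_i=\mathrm{cell}_T(s_i,\{s_1,\dots,s_k\})$ for all $i$, where $\mathrm{cell}_T(s,\Sigma)=\{x\mid d_T(s,x)\le d_T(s',x)\ \forall s'\in\Sigma\}$ and $d_T$ is shortest-path distance. Define $\mathrm{res}'(I)=\min\bigl(\mathbb{R}_{>0}\cap\{d_T(v,u)-d_T(v',u)\mid v,v',u\in V(T)\}\bigr)$. Construction of $T'$ with lengths $\lambda'$: for each edge $uv$ of $T$ create two vertices $a_{u,v},a_{v,u}$ joined by an edge, of length $\lambda(uv)$ if $u,v$ lie in the same $U_i$ and of length $\lambda(uv)-\delta$ otherwise; for each vertex $u$ of $T$, connect the vertices $\{a_{u,v}\mid uv\in E(T)\}$ by a path (in some order) whose edges have length $\delta'$.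 Set $U_i'=\{a_{u,v}\mid u\in U_i,\ uv\in E(T)\}$ and $S_i'=\{a_{u,v}\mid u\in S_i,\ uv\in E(T)\}$. *)

theory Defs
  imports Complex_Main
begin

definition graph_edges_ok :: "'a set \<Rightarrow> 'a set set \<Rightarrow> bool" where
  "graph_edges_ok V E \<longleftrightarrow> (\<forall>e\<in>E. \<exists>x y. x \<in> V \<and> y \<in> V \<and> x \<noteq> y \<and> e = {x, y})"

definition walk :: "'a set \<Rightarrow> 'a set set \<Rightarrow> 'a list \<Rightarrow> bool" where
  "walk V E p \<longleftrightarrow> p \<noteq> [] \<and> set p \<subseteq> V \<and>
     (\<forall>i. Suc i < length p \<longrightarrow> {p ! i, p ! Suc i} \<in> E)"

definition walk_len :: "('a set \<Rightarrow> real) \<Rightarrow> 'a list \<Rightarrow> real" where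
  "walk_len lam p = (\<Sum>i<length p - 1. lam {p ! i, p ! Suc i})"

definition dist_T :: "'a set \<Rightarrow> 'a set set \<Rightarrow> ('a set \<Rightarrow> real) \<Rightarrow> 'a \<Rightarrow> 'a \<Rightarrow> real" where
  "dist_T V E lam x y =
     Inf {walk_len lam p | p. walk V E p \<and> hd p = x \<and> last p = y}"

definition connected_graph :: "'a set \<Rightarrow> 'a set set \<Rightarrow> bool" where
  "connected_graph V E \<longleftrightarrow>
     (\<forall>x\<in>V. \<forall>y\<in>V. \<exists>p. walk V E p \<and> hd p = x \<and> last p = y)"

definition is_tree :: "'a set \<Rightarrow> 'a set set \<Rightarrow> bool" where
  "is_tree V E \<longleftrightarrow> finite V \<and> V \<noteq> {} \<and> graph_edges_ok V E \<and>
     connected_graph V E \<and> card E = card V - 1"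

definition induces_subtree :: "'a set \<Rightarrow> 'a set set \<Rightarrow> 'a set \<Rightarrow> bool" where
  "induces_subtree V E U \<longleftrightarrow> U \<noteq> {} \<and> U \<subseteq> V \<and> connected_graph U {e \<in> E. e \<subseteq> U}"

definition cell :: "'a set \<Rightarrow> 'a set set \<Rightarrow> ('a set \<Rightarrow> real) \<Rightarrow> 'a \<Rightarrow> 'a set \<Rightarrow> 'a set" where
  "cell V E lam s \<Sigma> = {x \<in> V. \<forall>s'\<in>\<Sigma>. dist_T V E lam s x \<le> dist_T V E lam s' x}"

text \<open>Answer "yes" to Generalized Graphic Inverse Voronoi (indices 0..k-1).\<close>
definition ggiv_yes :: "'a set \<Rightarrow> 'a set set \<Rightarrow> ('a set \<Rightarrow> real) \<Rightarrow> nat \<Rightarrow>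
    (nat \<Rightarrow> 'a set) \<Rightarrow> (nat \<Rightarrow> 'a set) \<Rightarrow> bool" where
  "ggiv_yes V E lam k U S \<longleftrightarrow>
     (\<exists>s. \<forall>i<k. s i \<in> S i \<and> U i = cell V E lam (s i) (s ` {..<k}))"

definition res' :: "'a set \<Rightarrow> 'a set set \<Rightarrow> ('a set \<Rightarrow> real) \<Rightarrow> real" where
  "res' V E lam = Min ({0<..} \<inter>
     {dist_T V E lam v u - dist_T V E lam v' u | v v' u. v \<in> V \<and> v' \<in> V \<and> u \<in> V})"

text \<open>ord u lists the neighbours of u, giving the order of the path at u.\<close>
definition valid_orders :: "'a set \<Rightarrow> 'a set set \<Rightarrow> ('a \<Rightarrow> 'a list) \<Rightarrow> bool" where
  "valid_orders V E ord \<longleftrightarrow>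
     (\<forall>u\<in>V. distinct (ord u) \<and> set (ord u) = {v. {u, v} \<in> E})"

text \<open>Vertex a_{u,v} is the pair (u,v).\<close>
definition V' :: "'a set set \<Rightarrow> ('a \<times> 'a) set" where
  "V' E = {(u, v). {u, v} \<in> E}"

definition cross_edges :: "'a set set \<Rightarrow> ('a \<times> 'a) set set" where
  "cross_edges E = {{(u, v), (v, u)} | u v. {u, v} \<in> E}"

definition path_edges :: "'a set \<Rightarrow> ('a \<Rightarrow> 'a list) \<Rightarrow> ('a \<times> 'a) set set" where
  "path_edges V ord = {{(u, ord u ! i), (u, ord u ! Suc i)} | u i. u \<in> V \<and> Suc i < length (ord u)}"

definition E' :: "'a set \<Rightarrow> 'a set set \<Rightarrow> ('a \<Rightarrow> 'a list) \<Rightarrow> ('a \<times> 'a) set set" where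
  "E' V E ord = cross_edges E \<union> path_edges V ord"

definition lam' :: "'a set set \<Rightarrow> ('a set \<Rightarrow> real) \<Rightarrow> nat \<Rightarrow> (nat \<Rightarrow> 'a set) \<Rightarrow> real \<Rightarrow> real \<Rightarrow>
    ('a \<times> 'a) set \<Rightarrow> real" where
  "lam' E lam k U \<delta> \<delta>' e =
     (if e \<in> cross_edges E then
        (if \<exists>i<k. fst ` e \<subseteq> U i then lam (fst ` e) else lam (fst ` e) - \<delta>)
      else \<delta>')"

definition U' :: "'a set set \<Rightarrow> 'a set \<Rightarrow> ('a \<times> 'a) set" where
  "U' E A = {(u, v). u \<in> A \<and> {u, v} \<in> E}"

end

theory Submission
  imports Defs
begin


fun wl :: "('a set \<Rightarrow> real) \<Rightarrow> 'a list \<Rightarrow> real" where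
  "wl lam (x # y # r) = lam {x, y} + wl lam (y # r)"
| "wl lam _ = 0"

lemma walk_len_wl: "walk_len lam p = wl lam p"
proof (induction lam p rule: wl.induct)
  case (1 lam x y r)
  then show ?case
    unfolding walk_len_def by (simp add: sum.lessThan_Suc_shift del: sum.lessThan_Suc)
qed (auto simp: walk_len_def)

lemma walk_Nil[simp]: "\<not> walk V E []"
  by (simp add: walk_def)

lemma walk_single[simp]: "walk V E [x] \<longleftrightarrow> x \<in> V"
  by (simp add: walk_def)

lemma walk_Cons2[simp]: "walk V E (x # y # r) \<longleftrightarrow> x \<in> V \<and> {x, y} \<in> E \<and> walk V E (y # r)"
proof
  assume w: "walk V E (x # y # r)"
  have "{x, y} \<in> E" using w unfolding walk_def by (metis length_Cons nth_Cons_0 nth_Cons_Suc zero_less_Suc Suc_less_eq)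
  moreover have "walk V E (y # r)" using w unfolding walk_def
    by (metis (no_types, lifting) Suc_less_eq insert_subset length_Cons list.distinct(1) list.simps(15) nth_Cons_Suc)
  ultimately show "x \<in> V \<and> {x, y} \<in> E \<and> walk V E (y # r)" using w by (simp add: walk_def)
next
  assume a: "x \<in> V \<and> {x, y} \<in> E \<and> walk V E (y # r)"
  show "walk V E (x # y # r)" unfolding walk_def
  proof (intro conjI allI impI)
    fix i assume "Suc i < length (x # y # r)"
    then show "{(x # y # r) ! i, (x # y # r) ! Suc i} \<in> E"
      using a unfolding walk_def by (cases i) auto
  qed (use a in \<open>auto simp: walk_def\<close>)
qed

lemma walk_Cons_walk: "walk V E (x # r) \<Longrightarrow> r \<noteq> [] \<Longrightarrow> walk V E r"
  by (cases r) auto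

lemma walk_app: "walk V E (xs @ a # r) \<longleftrightarrow> (xs = [] \<or> (walk V E xs \<and> {last xs, a} \<in> E)) \<and> walk V E (a # r)"
proof (induction xs)
  case Nil then show ?case by simp
next
  case (Cons x xs)
  then show ?case by (cases xs) auto
qed

lemma wl_app: "wl lam (xs @ a # r) = (if xs = [] then 0 else wl lam xs + lam {last xs, a}) + wl lam (a # r)"
proof (induction xs)
  case Nil then show ?case by simp
next
  case (Cons x xs)
  then show ?case by (cases xs) auto
qed

lemma wl_nonneg: "\<forall>e\<in>E. lam e \<ge> 0 \<Longrightarrow> walk V E p \<Longrightarrow> wl lam p \<ge> 0"
proof (induction lam p rule: wl.induct)
  case (1 lam x y r) then show ?case by auto
qed auto

lemma walk_rev: "walk V E p \<Longrightarrow> walk V E (rev p) \<and> wl lam (rev p) = wl lam p"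
proof (induction lam p rule: wl.induct)
  case (1 lam x y r)
  have "walk V E (rev (y # r))" "wl lam (rev (y # r)) = wl lam (y # r)" using 1 by auto
  moreover have "rev (x # y # r) = rev (y # r) @ [x]" by simp
  moreover have "last (rev (y # r)) = y" by simp
  ultimately show ?case using 1
    by (simp only: walk_app wl_app) (auto simp: insert_commute)
qed auto

lemma potential:
  assumes "walk V E p" "\<And>x y. {x, y} \<in> E \<Longrightarrow> \<phi> y - \<phi> x \<le> lam {x, y}"
  shows "\<phi> (last p) - \<phi> (hd p) \<le> wl lam p"
  using assms
proof (induction lam p rule: wl.induct)
  case (1 lam x y r)
  then have "\<phi> (last (y # r)) - \<phi> y \<le> wl lam (y # r)" by auto
  moreover have "\<phi> y - \<phi> x \<le> lam {x, y}" using 1 by auto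
  ultimately show ?case by simp
qed auto

lemma shortcut:
  assumes "walk V E p" "\<forall>e\<in>E. lam e \<ge> 0"
  shows "\<exists>q. walk V E q \<and> distinct q \<and> hd q = hd p \<and> last q = last p \<and> wl lam q \<le> wl lam p \<and> set q \<subseteq> set p"
  using assms(1)
proof (induction "length p" arbitrary: p rule: less_induct)
  case less
  show ?case
  proof (cases "distinct p")
    case True then show ?thesis using less.prems by auto
  next
    case False
    then obtain xs ys zs a where p: "p = xs @ a # (ys @ a # zs)"
      using not_distinct_decomp by fastforce
    define q where "q = xs @ a # zs"
    have w1: "walk V E (a # ys @ a # zs)" and w0: "xs = [] \<or> (walk V E xs \<and> {last xs, a} \<in> E)"
      using less.prems p walk_app by metis+
    have "a # ys @ a # zs = (a # ys) @ a # zs" by simp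
    then have w2: "walk V E (a # ys)" "{last (a # ys), a} \<in> E" "walk V E (a # zs)"
      using w1 walk_app[of V E "a # ys" a zs] by auto
    have wq: "walk V E q" unfolding q_def using w0 w2 walk_app by metis
    have "wl lam (a # ys @ a # zs) = wl lam (a # ys) + lam {last (a # ys), a} + wl lam (a # zs)"
      using wl_app[of lam "a # ys" a zs] by simp
    moreover have "wl lam (a # ys) \<ge> 0" using wl_nonneg[OF assms(2) w2(1)] .
    moreover have "lam {last (a # ys), a} \<ge> 0" using assms(2) w2(2) by auto
    ultimately have "wl lam (a # zs) \<le> wl lam (a # ys @ a # zs)" by simp
    then have lq: "wl lam q \<le> wl lam p" unfolding q_def p using wl_app[of lam xs a] by simp
    have "length q < length p" unfolding q_def p by simp
    then obtain r where r: "walk V E r \<and> distinct r \<and> hd r = hd q \<and> last r = last q \<and> wl lam r \<le> wl lam q \<and> set r \<subseteq> set q"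
      using less.hyps wq by blast
    have "hd q = hd p" "last q = last p" "set q \<subseteq> set p" unfolding q_def p by (auto simp: hd_append last_append)
    then show ?thesis using r lq by (intro exI[of _ r]) auto
  qed
qed

lemma dist_le:
  assumes "\<forall>e\<in>E. lam e \<ge> 0" "walk V E p"
  shows "dist_T V E lam (hd p) (last p) \<le> wl lam p"
  unfolding dist_T_def walk_len_wl
proof (rule cInf_lower)
  show "wl lam p \<in> {wl lam pa |pa. walk V E pa \<and> hd pa = hd p \<and> last pa = last p}"
    using assms by auto
  show "bdd_below {wl lam pa |pa. walk V E pa \<and> hd pa = hd p \<and> last pa = last p}"
    using wl_nonneg[OF assms(1)] by (auto intro!: bdd_belowI[of _ 0])
qed

lemma dist_ge:
  assumes "\<exists>p. walk V E p \<and> hd p = x \<and> last p = y"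
    "\<And>p. walk V E p \<Longrightarrow> hd p = x \<Longrightarrow> last p = y \<Longrightarrow> c \<le> wl lam p"
  shows "c \<le> dist_T V E lam x y"
  unfolding dist_T_def walk_len_wl
  by (rule cInf_greatest) (use assms in auto)

lemma dist_attain:
  assumes fin: "finite V" and cg: "connected_graph V E" and nn: "\<forall>e\<in>E. lam e \<ge> 0"
    and xy: "x \<in> V" "y \<in> V"
  shows "\<exists>q. walk V E q \<and> distinct q \<and> hd q = x \<and> last q = y \<and> dist_T V E lam x y = wl lam q"
proof -
  define Q where "Q = {q. walk V E q \<and> distinct q \<and> hd q = x \<and> last q = y}"
  have "Q \<subseteq> {xs. set xs \<subseteq> V \<and> distinct xs}" unfolding Q_def walk_def by auto
  then have finQ: "finite Q" using finite_subset_distinct[OF fin] finite_subset by blast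
  obtain p where p: "walk V E p" "hd p = x" "last p = y" using cg xy unfolding connected_graph_def by blast
  then obtain q0 where "q0 \<in> Q" using shortcut[OF p(1) nn] unfolding Q_def by blast
  then have ne: "wl lam ` Q \<noteq> {}" by auto
  have fin2: "finite (wl lam ` Q)" using finQ by simp
  obtain q where q: "q \<in> Q" "wl lam q = Min (wl lam ` Q)"
    using Min_in[OF fin2 ne] by auto
  have "dist_T V E lam x y \<le> wl lam q" using dist_le[OF nn, of V q] q(1) unfolding Q_def by auto
  moreover have "wl lam q \<le> dist_T V E lam x y"
  proof (rule dist_ge)
    show "\<exists>p. walk V E p \<and> hd p = x \<and> last p = y" using p by blast
    fix p assume "walk V E p" "hd p = x" "last p = y"
    then obtain r where r: "walk V E r \<and> distinct r \<and> hd r = x \<and> last r = y \<and> wl lam r \<le> wl lam p"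
      using shortcut[OF _ nn] by metis
    then have "r \<in> Q" unfolding Q_def by auto
    then have "wl lam q \<le> wl lam r" using q(2) Min_le[OF fin2] by auto
    then show "wl lam q \<le> wl lam p" using r by linarith
  qed
  ultimately show ?thesis using q(1) unfolding Q_def by auto
qed

lemma dist_edge:
  assumes fin: "finite V" and cg: "connected_graph V E" and nn: "\<forall>e\<in>E. lam e \<ge> 0"
    and a: "a \<in> V" "u \<in> V" and e: "{u, v} \<in> E" and v: "v \<in> V"
  shows "dist_T V E lam a v \<le> dist_T V E lam a u + lam {u, v}"
proof -
  obtain q where q: "walk V E q" "hd q = a" "last q = u" "dist_T V E lam a u = wl lam q"
    using dist_attain[OF fin cg nn a] by blast
  have w: "walk V E (q @ [v])" using q e v walk_app[of V E q v "[]"] by auto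
  have "wl lam (q @ [v]) = wl lam q + lam {u, v}" using wl_app[of lam q v "[]"] q by (cases "q = []") auto
  moreover have "hd (q @ [v]) = a" "last (q @ [v]) = v" using q by (auto simp: hd_append)
  ultimately show ?thesis using dist_le[OF nn w] q by auto
qed

lemma dist_self:
  assumes nn: "\<forall>e\<in>E. lam e \<ge> 0" and a: "a \<in> V"
  shows "dist_T V E lam a a = 0"
proof -
  have "dist_T V E lam a a \<le> 0" using dist_le[OF nn, of V "[a]"] a by auto
  moreover have "0 \<le> dist_T V E lam a a"
  proof (rule dist_ge)
    show "\<exists>p. walk V E p \<and> hd p = a \<and> last p = a" using a by (intro exI[of _ "[a]"]) auto
  qed (use wl_nonneg[OF nn] in auto)
  ultimately show ?thesis by simp
qed

definition RR :: "'a set set \<Rightarrow> ('a \<times> 'a) set" where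
  "RR F = {(x, y). {x, y} \<in> F}"

lemma sym_RR: "sym (RR F)"
  unfolding RR_def sym_def by (auto simp: insert_commute)

lemma walk_rtrancl: "walk V F p \<Longrightarrow> (hd p, last p) \<in> (RR F)\<^sup>*"
proof (induction p rule: induct_list012)
  case (3 x y zs)
  then have "(y, last (y # zs)) \<in> (RR F)\<^sup>*" "(x, y) \<in> RR F" by (auto simp: RR_def)
  then show ?case by auto
qed auto

lemma card_factor:
  assumes "finite A" "\<forall>x\<in>A. \<forall>y\<in>A. g x = g y \<longrightarrow> f x = f y"
  shows "card (f ` A) \<le> card (g ` A)"
proof -
  define h where "h z = f (SOME x. x \<in> A \<and> g x = z)" for z
  have "f ` A = h ` (g ` A)"
  proof (intro equalityI subsetI)
    fix w assume "w \<in> f ` A"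
    then obtain x where x: "x \<in> A" "w = f x" by auto
    have "\<exists>x'. x' \<in> A \<and> g x' = g x" using x by auto
    then have "(SOME x'. x' \<in> A \<and> g x' = g x) \<in> A \<and> g (SOME x'. x' \<in> A \<and> g x' = g x) = g x"
      by (rule someI_ex)
    then have "h (g x) = w" unfolding h_def using assms(2) x by metis
    then show "w \<in> h ` (g ` A)" using x(1) unfolding x(2) by (intro image_eqI[of _ h "g x"]) auto
  next
    fix w assume "w \<in> h ` (g ` A)"
    then obtain x where x: "x \<in> A" "w = h (g x)" by auto
    have "\<exists>x'. x' \<in> A \<and> g x' = g x" using x by auto
    then have "(SOME x'. x' \<in> A \<and> g x' = g x) \<in> A"
      by (metis (mono_tags, lifting) someI_ex)
    then show "w \<in> f ` A" unfolding x h_def by auto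
  qed
  then show ?thesis using card_image_le assms(1) by (metis finite_imageI)
qed

lemma rt_sym: "(x, y) \<in> (RR F)\<^sup>* \<Longrightarrow> (y, x) \<in> (RR F)\<^sup>*"
  using sym_RR sym_rtrancl by (metis symD)

lemma cls_eq: "(x, y) \<in> (RR F)\<^sup>* \<Longrightarrow> (RR F)\<^sup>* `` {x} = (RR F)\<^sup>* `` {y}"
proof -
  assume a: "(x, y) \<in> (RR F)\<^sup>*"
  then have b: "(y, x) \<in> (RR F)\<^sup>*" by (rule rt_sym)
  show ?thesis using a b by (auto intro: rtrancl_trans)
qed

lemma count:
  assumes "finite V" "finite F" "\<forall>f\<in>F. \<exists>x y. x \<in> V \<and> y \<in> V \<and> x \<noteq> y \<and> f = {x, y}"
  shows "card V \<le> card F + card ((\<lambda>x. (RR F)\<^sup>* `` {x}) ` V)"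
  using assms(2,3)
proof (induction F rule: finite_induct)
  case empty
  have h: "(RR ({} :: 'a set set))\<^sup>* = Id" unfolding RR_def by simp
  then have "(\<lambda>x. (RR {})\<^sup>* `` {x}) ` V = (\<lambda>x. {x}) ` V" by simp
  moreover have "card ((\<lambda>x. {x}) ` V) = card V" by (rule card_image) (auto simp: inj_on_def)
  ultimately show ?case by simp
next
  case (insert f F)
  obtain a b where ab: "a \<in> V" "b \<in> V" "a \<noteq> b" "f = {a, b}" using insert.prems by blast
  have IH: "card V \<le> card F + card ((\<lambda>x. (RR F)\<^sup>* `` {x}) ` V)" using insert by auto
  define r where "r = RR F"
  define c where "c x = r\<^sup>* `` {x}" for x
  define c' where "c' x = (RR (insert f F))\<^sup>* `` {x}" for x
  define A where "A = V - r\<^sup>* `` {a}"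
  have rr: "RR (insert f F) = insert (a, b) (insert (b, a) r)"
    unfolding r_def RR_def ab by (auto simp: doubleton_eq_iff)
  have "c ` V \<subseteq> insert (c a) (c ` A)"
  proof
    fix w assume "w \<in> c ` V"
    then obtain x where x: "x \<in> V" "w = c x" by auto
    show "w \<in> insert (c a) (c ` A)"
    proof (cases "(a, x) \<in> r\<^sup>*")
      case True then have "c x = c a" unfolding c_def r_def using cls_eq by metis
      then show ?thesis using x by auto
    next
      case False then show ?thesis using x unfolding A_def by auto
    qed
  qed
  then have "card (c ` V) \<le> card (insert (c a) (c ` A))"
    by (intro card_mono) (use assms(1) A_def in auto)
  also have "\<dots> \<le> card (c ` A) + 1" by (simp add: card_insert_le_m1 card_insert_if)
  also have "card (c ` A) \<le> card (c' ` A)"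
  proof (rule card_factor)
    show "finite A" using assms(1) A_def by auto
    show "\<forall>x\<in>A. \<forall>y\<in>A. c' x = c' y \<longrightarrow> c x = c y"
    proof (intro ballI impI)
      fix x y assume x: "x \<in> A" and y: "y \<in> A" and e: "c' x = c' y"
      have nx1: "(a, x) \<notin> r\<^sup>*" using x unfolding A_def by auto
      have nx: "(a, x) \<notin> r\<^sup>*" "(x, a) \<notin> r\<^sup>*" using nx1 rt_sym[of x a F] unfolding r_def by blast+
      have ny1: "(a, y) \<notin> r\<^sup>*" using y unfolding A_def by auto
      have ny: "(a, y) \<notin> r\<^sup>*" "(y, a) \<notin> r\<^sup>*" using ny1 rt_sym[of y a F] unfolding r_def by blast+
      have "y \<in> c' y" unfolding c'_def by auto
      then have "(x, y) \<in> (insert (a, b) (insert (b, a) r))\<^sup>*" using e unfolding c'_def rr by auto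
      then have "(x, y) \<in> (insert (b, a) r)\<^sup>* \<or> ((x, a) \<in> (insert (b, a) r)\<^sup>* \<and> (b, y) \<in> (insert (b, a) r)\<^sup>*)"
        unfolding rtrancl_insert[of a b] by blast
      then have H: "(x, y) \<in> r\<^sup>* \<or> ((x, b) \<in> r\<^sup>* \<and> (a, y) \<in> r\<^sup>*) \<or>
         (((x, a) \<in> r\<^sup>* \<or> ((x, b) \<in> r\<^sup>* \<and> (a, a) \<in> r\<^sup>*)) \<and>
          ((b, y) \<in> r\<^sup>* \<or> ((b, b) \<in> r\<^sup>* \<and> (a, y) \<in> r\<^sup>*)))"
        unfolding rtrancl_insert[of b a] by blast
      have "(x, y) \<in> r\<^sup>*"
      proof -
        { assume "(x, b) \<in> r\<^sup>*" "(b, y) \<in> r\<^sup>*"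
          then have ?thesis by (rule rtrancl_trans) }
        then show ?thesis using H nx ny by blast
      qed
      then show "c x = c y" unfolding c_def r_def using cls_eq by metis
    qed
  qed
  also have "card (c' ` A) \<le> card (c' ` V)"
    by (intro card_mono) (use assms(1) A_def in auto)
  finally have "card (c ` V) \<le> card (c' ` V) + 1" by simp
  moreover have "card (insert f F) = card F + 1" using insert by simp
  ultimately show ?case using IH unfolding c_def c'_def r_def by simp
qed

lemma bridge:
  assumes tree: "is_tree V E" and e: "{u, v} \<in> E"
  shows "(v, u) \<notin> (RR (E - {{u, v}}))\<^sup>*"
proof
  assume vu: "(v, u) \<in> (RR (E - {{u, v}}))\<^sup>*"
  define F where "F = E - {{u, v}}"
  have fin: "finite V" and ok: "graph_edges_ok V E" and cg: "connected_graph V E"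
    and cE: "card E = card V - 1" using tree unfolding is_tree_def by auto
  have EV: "E \<subseteq> Pow V" using ok unfolding graph_edges_ok_def by auto
  then have finE: "finite E" using fin by (meson finite_Pow_iff finite_subset)
  obtain x y where xy: "x \<in> V" "y \<in> V" "x \<noteq> y" "{u, v} = {x, y}" using ok e unfolding graph_edges_ok_def by blast
  then have uv: "u \<in> V" "v \<in> V" "u \<noteq> v" by (auto simp: doubleton_eq_iff)
  have "RR E \<subseteq> (RR F)\<^sup>*"
  proof
    fix p assume "p \<in> RR E"
    then obtain a b where p: "p = (a, b)" "{a, b} \<in> E" unfolding RR_def by auto
    show "p \<in> (RR F)\<^sup>*"
    proof (cases "{a, b} = {u, v}")
      case True
      then have "(a = u \<and> b = v) \<or> (a = v \<and> b = u)" by (auto simp: doubleton_eq_iff)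
      moreover have "(u, v) \<in> (RR F)\<^sup>*" using rt_sym[OF vu] unfolding F_def .
      ultimately show ?thesis using vu p unfolding F_def by auto
    next
      case False then show ?thesis using p unfolding F_def RR_def by auto
    qed
  qed
  then have sub: "(RR E)\<^sup>* \<subseteq> (RR F)\<^sup>*" by (rule rtrancl_subset_rtrancl)
  have "(\<lambda>x. (RR F)\<^sup>* `` {x}) ` V \<subseteq> {(RR F)\<^sup>* `` {u}}"
  proof
    fix w assume "w \<in> (\<lambda>x. (RR F)\<^sup>* `` {x}) ` V"
    then obtain z where z: "z \<in> V" "w = (RR F)\<^sup>* `` {z}" by auto
    obtain p where "walk V E p" "hd p = z" "last p = u" using cg z uv unfolding connected_graph_def by blast
    then have "(z, u) \<in> (RR E)\<^sup>*" using walk_rtrancl[of V E p] by simp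
    then have "(z, u) \<in> (RR F)\<^sup>*" using sub by blast
    then have "(RR F)\<^sup>* `` {z} = (RR F)\<^sup>* `` {u}" by (rule cls_eq)
    then show "w \<in> {(RR F)\<^sup>* `` {u}}" using z by simp
  qed
  then have c1: "card ((\<lambda>x. (RR F)\<^sup>* `` {x}) ` V) \<le> 1"
    using card_mono[of "{(RR F)\<^sup>* `` {u}}"] by simp
  have "card F = card E - 1" unfolding F_def using e finE by (simp add: card_Diff_singleton)
  moreover have "2 \<le> card V"
  proof -
    have "{u, v} \<subseteq> V" using uv by auto
    then have "card {u, v} \<le> card V" using fin card_mono by blast
    then show ?thesis using uv by simp
  qed
  moreover have "card V \<le> card F + card ((\<lambda>x. (RR F)\<^sup>* `` {x}) ` V)"
  proof (rule count[OF fin])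
    show "finite F" unfolding F_def using finE by simp
    show "\<forall>f\<in>F. \<exists>x y. x \<in> V \<and> y \<in> V \<and> x \<noteq> y \<and> f = {x, y}"
      using ok unfolding F_def graph_edges_ok_def by blast
  qed
  ultimately show False using c1 cE by linarith
qed

lemma walk_mono: "walk V1 E1 p \<Longrightarrow> V1 \<subseteq> V2 \<Longrightarrow> E1 \<subseteq> E2 \<Longrightarrow> walk V2 E2 p"
  unfolding walk_def by blast

lemma walk_drop:
  assumes "walk V E q" "t < length q"
  shows "walk V E (drop t q)" "hd (drop t q) = q ! t" "last (drop t q) = last q"
proof -
  show "walk V E (drop t q)" using assms unfolding walk_def
    by (auto dest: in_set_dropD)
  show "hd (drop t q) = q ! t" using assms by (simp add: hd_drop_conv_nth)
  show "last (drop t q) = last q" using assms by simp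
qed

lemma stay:
  assumes tree: "is_tree V E" and W: "induces_subtree V E W"
    and q: "walk V E q" "distinct q" "hd q \<in> W" "last q \<in> W"
  shows "set q \<subseteq> W"
proof -
  have ne: "q \<noteq> []" using q(1) by (auto simp: walk_def)
  have "\<forall>t. t < length q \<longrightarrow> q ! t \<in> W"
  proof (intro allI)
    fix t show "t < length q \<longrightarrow> q ! t \<in> W"
    proof (induction t)
      case 0 then show ?case using q(3) ne by (simp add: hd_conv_nth)
    next
      case (Suc t)
      show ?case
      proof (rule impI, rule ccontr)
        assume lt: "Suc t < length q" and nW: "q ! Suc t \<notin> W"
        define u where "u = q ! t"
        define v where "v = q ! Suc t"
        have uW: "u \<in> W" using Suc lt u_def by auto
        have e: "{u, v} \<in> E" using q(1) lt unfolding walk_def u_def v_def by auto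
        define tl' where "tl' = drop (Suc t) q"
        have wt: "walk V E tl'" "hd tl' = v" "last tl' = last q"
          using walk_drop[OF q(1) lt] unfolding tl'_def v_def by auto
        have "walk V (E - {{u, v}}) tl'"
          unfolding walk_def
        proof (intro conjI allI impI)
          show "tl' \<noteq> []" "set tl' \<subseteq> V" using wt(1) unfolding walk_def by auto
          fix i assume i: "Suc i < length tl'"
          have "{tl' ! i, tl' ! Suc i} \<in> E" using wt(1) i unfolding walk_def by auto
          moreover have "{tl' ! i, tl' ! Suc i} \<noteq> {u, v}"
          proof
            assume "{tl' ! i, tl' ! Suc i} = {u, v}"
            then have "u = tl' ! i \<or> u = tl' ! Suc i" by (auto simp: doubleton_eq_iff)
            then have "q ! t = q ! (Suc t + i) \<or> q ! t = q ! (Suc t + Suc i)"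
              unfolding u_def tl'_def using i lt by simp
            moreover have "Suc t + Suc i < length q" using i unfolding tl'_def by auto
            moreover have "t < length q" using lt by simp
            ultimately show False using nth_eq_iff_index_eq[OF q(2), of t "Suc t + i"]
                nth_eq_iff_index_eq[OF q(2), of t "Suc t + Suc i"] by force
          qed
          ultimately show "{tl' ! i, tl' ! Suc i} \<in> E - {{u, v}}" by simp
        qed
        from walk_rtrancl[OF this] have r1: "(v, last q) \<in> (RR (E - {{u, v}}))\<^sup>*" using wt by simp
        have cW: "connected_graph W {f \<in> E. f \<subseteq> W}" and WV: "W \<subseteq> V"
          using W unfolding induces_subtree_def by auto
        obtain p where p: "walk W {f \<in> E. f \<subseteq> W} p" "hd p = last q" "last p = u"
          using cW q(4) uW unfolding connected_graph_def by blast
        have "{f \<in> E. f \<subseteq> W} \<subseteq> E - {{u, v}}" using nW unfolding v_def by auto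
        then have "walk V (E - {{u, v}}) p" using walk_mono[OF p(1) WV] by blast
        from walk_rtrancl[OF this] have r2: "(last q, u) \<in> (RR (E - {{u, v}}))\<^sup>*" using p by simp
        have "(v, u) \<in> (RR (E - {{u, v}}))\<^sup>*" using r1 r2 by (rule rtrancl_trans)
        then show False using bridge[OF tree e] by blast
      qed
    qed
  qed
  then show ?thesis by (auto simp: in_set_conv_nth)
qed

definition lamR :: "('a set \<Rightarrow> real) \<Rightarrow> nat \<Rightarrow> (nat \<Rightarrow> 'a set) \<Rightarrow> real \<Rightarrow> 'a set \<Rightarrow> real" where
  "lamR lam k U \<delta> e = (if \<exists>i<k. e \<subseteq> U i then lam e else lam e - \<delta>)"

lemma lam'_eq: "lam' E lam k U \<delta> \<delta>' e = (if e \<in> cross_edges E then lamR lam k U \<delta> (fst ` e) else \<delta>')"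
  by (simp add: lam'_def lamR_def)

lemma cross_in: "{u, v} \<in> E \<Longrightarrow> {(u, v), (v, u)} \<in> cross_edges E"
  unfolding cross_edges_def by blast

lemma fst_pair2: "fst ` {(u, v), (v, u)} = {u, v}"
  by auto

lemma path_not_cross:
  assumes ok: "graph_edges_ok V E" and "{(u, a), (u, b)} \<in> cross_edges E"
  shows False
proof -
  obtain x y where xy: "{(u, a), (u, b)} = {(x, y), (y, x)}" "{x, y} \<in> E"
    using assms(2) unfolding cross_edges_def by blast
  have "x \<noteq> y" using ok xy(2) unfolding graph_edges_ok_def by (auto simp: doubleton_eq_iff)
  then show False using xy(1) by (auto simp: doubleton_eq_iff)
qed

lemma wl_LR_le:
  assumes "\<delta> \<ge> 0" shows "wl (lamR lam k U \<delta>) q \<le> wl lam q"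
proof (induction lam q rule: wl.induct)
  case (1 lam x y r)
  have "lamR lam k U \<delta> {x, y} \<le> lam {x, y}" using assms by (simp add: lamR_def)
  then show ?case using 1 by simp
qed auto

lemma wl_LR_ge:
  assumes "\<delta> \<ge> 0" shows "wl (lamR lam k U \<delta>) q \<ge> wl lam q - \<delta> * real (length q - 1)"
proof (induction lam q rule: wl.induct)
  case (1 lam x y r)
  have "lamR lam k U \<delta> {x, y} \<ge> lam {x, y} - \<delta>" using assms by (simp add: lamR_def)
  then show ?case using 1 by (simp add: algebra_simps)
qed auto

lemma wl_LR_in: "m < k \<Longrightarrow> set q \<subseteq> U m \<Longrightarrow> wl (lamR lam k U \<delta>) q = wl lam q"
proof (induction lam q rule: wl.induct)
  case (1 lam x y r)
  then have "lamR lam k U \<delta> {x, y} = lam {x, y}" by (auto simp: lamR_def)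
  then show ?case using 1 by simp
qed auto

lemma wl_LR_cross:
  assumes "\<delta> \<ge> 0" "j < k" "\<forall>i<k. \<forall>j<k. i \<noteq> j \<longrightarrow> U i \<inter> U j = {}"
  shows "hd q \<in> U j \<Longrightarrow> last q \<notin> U j \<Longrightarrow> q \<noteq> [] \<Longrightarrow> wl (lamR lam k U \<delta>) q \<le> wl lam q - \<delta>"
proof (induction lam q rule: wl.induct)
  case (1 lam x y r)
  show ?case
  proof (cases "y \<in> U j")
    case True
    then have "wl (lamR lam k U \<delta>) (y # r) \<le> wl lam (y # r) - \<delta>" using 1 by simp
    moreover have "lamR lam k U \<delta> {x, y} \<le> lam {x, y}" using assms(1) by (auto simp: lamR_def)
    ultimately show ?thesis by simp
  next
    case False
    have nP: "\<not> (\<exists>i<k. {x, y} \<subseteq> U i)"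
    proof
      assume "\<exists>i<k. {x, y} \<subseteq> U i"
      then obtain i where i: "i < k" "{x, y} \<subseteq> U i" by blast
      show False
      proof (cases "i = j")
        case True then show False using i False by auto
      next
        case ne: False
        then show False using assms(2,3) i 1(2) by auto
      qed
    qed
    have "lamR lam k U \<delta> {x, y} = lam {x, y} - \<delta>" unfolding lamR_def by (rule if_not_P[OF nP])
    moreover have "wl (lamR lam k U \<delta>) (y # r) \<le> wl lam (y # r)" using wl_LR_le assms(1) by blast
    ultimately show ?thesis by simp
  qed
qed auto

lemma ord_mem:
  assumes ord: "valid_orders V E ord" and u: "u \<in> V" and t: "t < length (ord u)"
  shows "(u, ord u ! t) \<in> V' E"
proof -
  have "ord u ! t \<in> set (ord u)" using t by simp
  then show ?thesis using ord u unfolding valid_orders_def V'_def by auto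
qed

lemma path_edge_L:
  assumes ok: "graph_edges_ok V E" and u: "u \<in> V" and t: "Suc t < length (ord u)"
  shows "{(u, ord u ! t), (u, ord u ! Suc t)} \<in> E' V E ord"
    "lam' E lam k U \<delta> \<delta>' {(u, ord u ! t), (u, ord u ! Suc t)} = \<delta>'"
proof -
  show "{(u, ord u ! t), (u, ord u ! Suc t)} \<in> E' V E ord"
    unfolding E'_def path_edges_def using u t by blast
  have "{(u, ord u ! t), (u, ord u ! Suc t)} \<notin> cross_edges E"
    using path_not_cross[OF ok] by blast
  then show "lam' E lam k U \<delta> \<delta>' {(u, ord u ! t), (u, ord u ! Suc t)} = \<delta>'"
    by (simp add: lam'_def)
qed

lemma path_walk_up:
  assumes ok: "graph_edges_ok V E" and ord: "valid_orders V E ord" and u: "u \<in> V"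
  shows "i \<le> j \<Longrightarrow> j < length (ord u) \<Longrightarrow> \<exists>p'. walk (V' E) (E' V E ord) p' \<and> hd p' = (u, ord u ! i) \<and>
     last p' = (u, ord u ! j) \<and> wl (lam' E lam k U \<delta> \<delta>') p' = \<delta>' * real (j - i)"
proof (induction j)
  case 0
  then show ?case using ord_mem[OF ord u, of 0] by (intro exI[of _ "[(u, ord u ! 0)]"]) auto
next
  case (Suc j)
  show ?case
  proof (cases "i = Suc j")
    case True
    then show ?thesis using ord_mem[OF ord u, of i] Suc.prems by (intro exI[of _ "[(u, ord u ! i)]"]) auto
  next
    case False
    then obtain p' where p': "walk (V' E) (E' V E ord) p'" "hd p' = (u, ord u ! i)"
      "last p' = (u, ord u ! j)" "wl (lam' E lam k U \<delta> \<delta>') p' = \<delta>' * real (j - i)"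
      using Suc by auto
    have ne: "p' \<noteq> []" using p'(1) by auto
    have m: "(u, ord u ! Suc j) \<in> V' E" using ord_mem[OF ord u Suc.prems(2)] .
    note pe = path_edge_L(1)[where ord=ord and t=j, OF ok u Suc.prems(2)]
      path_edge_L(2)[where ord=ord and t=j and lam=lam and k=k and U=U and \<delta>=\<delta> and \<delta>'=\<delta>', OF ok u Suc.prems(2)]
    have w: "walk (V' E) (E' V E ord) (p' @ [(u, ord u ! Suc j)])"
      using walk_app[of "V' E" "E' V E ord" p' "(u, ord u ! Suc j)" "[]"] p' m pe by auto
    have "wl (lam' E lam k U \<delta> \<delta>') (p' @ [(u, ord u ! Suc j)]) = \<delta>' * real (j - i) + \<delta>'"
      using wl_app[of "lam' E lam k U \<delta> \<delta>'" p' "(u, ord u ! Suc j)" "[]"] p' pe ne by simp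
    also have "\<dots> = \<delta>' * real (Suc j - i)" using False Suc.prems
      by (simp add: Suc_diff_le algebra_simps)
    finally show ?thesis using w p' ne by (intro exI[of _ "p' @ [(u, ord u ! Suc j)]"]) (auto simp: hd_append)
  qed
qed

lemma path_walk:
  assumes ok: "graph_edges_ok V E" and ord: "valid_orders V E ord" and u: "u \<in> V" and d: "\<delta>' \<ge> 0"
    and i: "i < length (ord u)" and j: "j < length (ord u)"
  shows "\<exists>p'. walk (V' E) (E' V E ord) p' \<and> hd p' = (u, ord u ! i) \<and>
     last p' = (u, ord u ! j) \<and> wl (lam' E lam k U \<delta> \<delta>') p' \<le> \<delta>' * real (length (ord u))"
proof (cases "i \<le> j")
  case True
  then obtain p' where p': "walk (V' E) (E' V E ord) p'" "hd p' = (u, ord u ! i)"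
      "last p' = (u, ord u ! j)" "wl (lam' E lam k U \<delta> \<delta>') p' = \<delta>' * real (j - i)"
    using path_walk_up[OF ok ord u True j] by blast
  have "\<delta>' * real (j - i) \<le> \<delta>' * real (length (ord u))" using d j by (intro mult_left_mono) auto
  then show ?thesis using p' by auto
next
  case False
  then obtain p' where p': "walk (V' E) (E' V E ord) p'" "hd p' = (u, ord u ! j)"
      "last p' = (u, ord u ! i)" "wl (lam' E lam k U \<delta> \<delta>') p' = \<delta>' * real (i - j)"
    using path_walk_up[OF ok ord u, where lam=lam and k=k and U=U and \<delta>=\<delta> and \<delta>'=\<delta>' and i=j and j=i] False i by auto
  have "\<delta>' * real (i - j) \<le> \<delta>' * real (length (ord u))" using d i by (intro mult_left_mono) auto
  moreover have ne: "p' \<noteq> []" using p'(1) by auto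
  ultimately show ?thesis using p' walk_rev[OF p'(1), of "lam' E lam k U \<delta> \<delta>'"]
    by (intro exI[of _ "rev p'"]) (auto simp: hd_rev last_rev)
qed

lemma lift:
  assumes ok: "graph_edges_ok V E" and ord: "valid_orders V E ord" and d: "\<delta>' \<ge> 0"
  shows "walk V E p \<Longrightarrow> distinct p \<Longrightarrow> v \<in> set (ord (hd p)) \<Longrightarrow> y \<in> set (ord (last p)) \<Longrightarrow>
    \<exists>p'. walk (V' E) (E' V E ord) p' \<and> hd p' = (hd p, v) \<and> last p' = (last p, y) \<and>
      wl (lam' E lam k U \<delta> \<delta>') p' \<le> wl (lamR lam k U \<delta>) p + \<delta>' * (\<Sum>u\<in>set p. real (length (ord u)))"
proof (induction p arbitrary: v rule: induct_list012)
  case 1 then show ?case by simp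
next
  case (2 x)
  then have x: "x \<in> V" by simp
  obtain i where i: "i < length (ord x)" "ord x ! i = v" using 2 by (auto simp: in_set_conv_nth)
  obtain j where j: "j < length (ord x)" "ord x ! j = y" using 2 by (auto simp: in_set_conv_nth)
  show ?case using path_walk[OF ok ord x d i(1) j(1), of lam k U \<delta>] i j by auto
next
  case (3 x w r)
  have x: "x \<in> V" and xw: "{x, w} \<in> E" and wr: "walk V E (w # r)" using 3(3) by auto
  have wV: "w \<in> V" using wr by (auto simp: walk_def)
  have wx: "w \<in> set (ord x)" using ord x xw unfolding valid_orders_def by auto
  have xw': "x \<in> set (ord w)" using ord wV xw unfolding valid_orders_def by (auto simp: insert_commute)
  obtain i where i: "i < length (ord x)" "ord x ! i = v" using 3 by (auto simp: in_set_conv_nth)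
  obtain j where j: "j < length (ord x)" "ord x ! j = w" using wx by (auto simp: in_set_conv_nth)
  obtain p1 where p1: "walk (V' E) (E' V E ord) p1" "hd p1 = (x, v)" "last p1 = (x, w)"
      "wl (lam' E lam k U \<delta> \<delta>') p1 \<le> \<delta>' * real (length (ord x))"
    using path_walk[OF ok ord x d i(1) j(1), of lam k U \<delta>] i j by auto
  have "distinct (w # r)" using 3(4) by simp
  then obtain p2 where p2: "walk (V' E) (E' V E ord) p2" "hd p2 = (w, x)" "last p2 = (last (w # r), y)"
      "wl (lam' E lam k U \<delta> \<delta>') p2 \<le> wl (lamR lam k U \<delta>) (w # r) + \<delta>' * (\<Sum>u\<in>set (w # r). real (length (ord u)))"
    using 3(2)[OF wr _ _ ] xw' 3(6) by auto
  obtain t where t: "p2 = (w, x) # t" using p2(1,2) by (cases p2) auto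
  have ce: "{(x, w), (w, x)} \<in> E' V E ord" using cross_in[OF xw] unfolding E'_def by auto
  have Lce: "lam' E lam k U \<delta> \<delta>' {(x, w), (w, x)} = lamR lam k U \<delta> {x, w}"
    using cross_in[OF xw] by (simp add: lam'_eq fst_pair2)
  have ne1: "p1 \<noteq> []" using p1(1) by auto
  have W: "walk (V' E) (E' V E ord) (p1 @ (w, x) # t)"
    using walk_app[of "V' E" "E' V E ord" p1 "(w, x)" t] p1 p2(1) t ce ne1 by auto
  have "wl (lam' E lam k U \<delta> \<delta>') (p1 @ (w, x) # t) = wl (lam' E lam k U \<delta> \<delta>') p1 + lamR lam k U \<delta> {x, w} + wl (lam' E lam k U \<delta> \<delta>') p2"
    using wl_app[of "lam' E lam k U \<delta> \<delta>'" p1 "(w, x)" t] ne1 p1(3) Lce t by simp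
  moreover have "x \<notin> set (w # r)" using 3(4) by simp
  then have "(\<Sum>u\<in>set (x # w # r). real (length (ord u))) = real (length (ord x)) + (\<Sum>u\<in>set (w # r). real (length (ord u)))"
    by (simp add: sum.insert_remove)
  ultimately have "wl (lam' E lam k U \<delta> \<delta>') (p1 @ (w, x) # t) \<le> wl (lamR lam k U \<delta>) (x # w # r) + \<delta>' * (\<Sum>u\<in>set (x # w # r). real (length (ord u)))"
    using p1(4) p2(4) by (simp add: algebra_simps)
  moreover have "hd (p1 @ (w, x) # t) = (x, v)" using p1 ne1 by (simp add: hd_append)
  moreover have "last (p1 @ (w, x) # t) = (last (x # w # r), y)" using p2(3) t by simp
  ultimately show ?case using W by auto
qed

lemma cell_key:
  fixes f :: "nat \<Rightarrow> 'b \<Rightarrow> real"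
  assumes "\<forall>x\<in>X. \<exists>m<k. x \<in> W m" "\<forall>i<k. W i \<subseteq> X"
    "\<forall>i<k. \<forall>j<k. i \<noteq> j \<longrightarrow> W i \<inter> W j = {}"
    "\<And>x m j. x \<in> W m \<Longrightarrow> m < k \<Longrightarrow> j < k \<Longrightarrow> j \<noteq> m \<Longrightarrow> f m x < f j x" "i < k"
  shows "W i = {x \<in> X. \<forall>j<k. f i x \<le> f j x}"
proof (intro equalityI subsetI)
  fix x assume x: "x \<in> W i"
  have "\<forall>j<k. f i x \<le> f j x"
  proof (intro allI impI)
    fix j assume "j < k"
    then show "f i x \<le> f j x" using assms(4)[OF x assms(5), of j] by (cases "j = i") auto
  qed
  then show "x \<in> {x \<in> X. \<forall>j<k. f i x \<le> f j x}" using x assms(2,5) by auto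
next
  fix x assume x: "x \<in> {x \<in> X. \<forall>j<k. f i x \<le> f j x}"
  then obtain m where m: "m < k" "x \<in> W m" using assms(1) by auto
  show "x \<in> W i"
  proof (cases "m = i")
    case True then show ?thesis using m by simp
  next
    case False
    then have "f m x < f i x" using assms(4)[OF m(2) m(1) assms(5)] by auto
    moreover have "f i x \<le> f m x" using x m by auto
    ultimately show ?thesis by simp
  qed
qed

lemma edge_form:
  assumes "graph_edges_ok V E" "e \<in> E"
  obtains x y where "x \<in> V" "y \<in> V" "x \<noteq> y" "e = {x, y}"
proof -
  have "\<exists>x y. x \<in> V \<and> y \<in> V \<and> x \<noteq> y \<and> e = {x, y}"
    using assms(1)[unfolded graph_edges_ok_def, rule_format, OF assms(2)] .
  then show ?thesis using that by (elim exE conjE) 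
qed

lemma pairs2: "{(x, y). {x, y} = {a, b}} = {(a, b), (b, a)}"
proof (intro equalityI subsetI)
  fix z assume "z \<in> {(x, y). {x, y} = {a, b}}"
  then obtain x y where "z = (x, y)" "{x, y} = {a, b}" by blast
  then show "z \<in> {(a, b), (b, a)}" by (auto simp: doubleton_eq_iff)
next
  fix z assume "z \<in> {(a, b), (b, a)}"
  then show "z \<in> {(x, y). {x, y} = {a, b}}" by (auto simp: insert_commute)
qed

lemma sum_deg:
  assumes ok: "graph_edges_ok V E" and ord: "valid_orders V E ord" and fin: "finite V" and finE: "finite E"
  shows "(\<Sum>u\<in>V. real (length (ord u))) \<le> 2 * real (card E)"
proof -
  define N where "N u = {v. {u, v} \<in> E}" for u
  have NV: "N u \<subseteq> V" for u using ok unfolding N_def graph_edges_ok_def by (auto simp: doubleton_eq_iff)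
  have len: "length (ord u) = card (N u)" if "u \<in> V" for u
  proof -
    have "distinct (ord u)" "set (ord u) = N u" using ord that unfolding valid_orders_def N_def by auto
    then show ?thesis using distinct_card[of "ord u"] by simp
  qed
  have L0: "(\<Sum>u\<in>V. length (ord u)) = (\<Sum>u\<in>V. card (N u))" using len by simp
  have fN: "finite (N u)" for u using finite_subset[OF NV fin] .
  have L1: "(\<Sum>u\<in>V. card (N u)) = card (Sigma V N)" using fin fN by (subst card_SigmaI) auto
  have fe: "finite {(x, y). {x, y} = e}" if eE: "e \<in> E" for e
  proof -
    obtain a b where "e = {a, b}" using edge_form[OF ok eE] by metis
    then have "{(x, y). {x, y} = e} = {(a, b), (b, a)}" using pairs2 by simp
    then show ?thesis by simp
  qed
  have L2: "card (Sigma V N) \<le> card (\<Union>e\<in>E. {(x, y). {x, y} = e})"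
  proof (rule card_mono)
    show "finite (\<Union>e\<in>E. {(x, y). {x, y} = e})" by (rule finite_UN_I[OF finE fe])
    show "Sigma V N \<subseteq> (\<Union>e\<in>E. {(x, y). {x, y} = e})"
    proof
      fix z assume "z \<in> Sigma V N"
      then obtain a b where "z = (a, b)" "{a, b} \<in> E" unfolding N_def by blast
      then show "z \<in> (\<Union>e\<in>E. {(x, y). {x, y} = e})" by blast
    qed
  qed
  have L3: "card (\<Union>e\<in>E. {(x, y). {x, y} = e}) \<le> (\<Sum>e\<in>E. card {(x, y). {x, y} = e})"
    by (rule card_UN_le[OF finE])
  have L4: "(\<Sum>e\<in>E. card {(x, y). {x, y} = e}) \<le> (\<Sum>e\<in>E. 2)"
  proof (rule sum_mono)
    fix e assume "e \<in> E"
    then obtain a b where "e = {a, b}" using edge_form[OF ok] by metis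
    then have "{(x, y). {x, y} = e} = {(a, b), (b, a)}" using pairs2 by simp
    moreover have "card {(a, b), (b, a)} \<le> 2"
      by (rule card_insert_le_m1) simp_all
    ultimately show "card {(x, y). {x, y} = e} \<le> 2" by simp
  qed
  have "(\<Sum>u\<in>V. length (ord u)) \<le> 2 * card E" using L0 L1 L2 L3 L4 by simp
  then have "real (\<Sum>u\<in>V. length (ord u)) \<le> 2 * real (card E)" by linarith
  then show ?thesis by simp
qed

lemma res'_le:
  assumes fin: "finite V" and cg: "connected_graph V E" and pos: "\<forall>e\<in>E. lam e > 0"
    and e: "{u, v} \<in> E" "u \<noteq> v" "u \<in> V" "v \<in> V"
  shows "res' V E lam \<le> lam {u, v}"
proof -
  have nn: "\<forall>e\<in>E. lam e \<ge> 0" using pos by auto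
  define d where "d = dist_T V E lam"
  obtain q where q: "walk V E q" "distinct q" "hd q = u" "last q = v" "d u v = wl lam q"
    using dist_attain[OF fin cg nn e(3,4)] unfolding d_def by blast
  obtain w r where qw: "q = u # w # r" using q e(2) by (cases q; cases "tl q") auto
  have "d u v > 0"
  proof -
    have "{u, w} \<in> E" "walk V E (w # r)" using q(1) qw by auto
    then have "lam {u, w} > 0" "wl lam (w # r) \<ge> 0" using pos wl_nonneg[OF nn] by auto
    then show ?thesis using q(5) qw by simp
  qed
  have "d u v \<le> lam {u, v}" using dist_le[OF nn, of V "[u, v]"] e unfolding d_def by auto
  define D where "D = {dist_T V E lam a c - dist_T V E lam b c | a b c. a \<in> V \<and> b \<in> V \<and> c \<in> V}"
  have "D \<subseteq> (\<lambda>(a, b, c). dist_T V E lam a c - dist_T V E lam b c) ` (V \<times> V \<times> V)"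
  proof
    fix z assume "z \<in> D"
    then obtain a b c where "z = dist_T V E lam a c - dist_T V E lam b c" "a \<in> V" "b \<in> V" "c \<in> V"
      unfolding D_def by blast
    then show "z \<in> (\<lambda>(a, b, c). dist_T V E lam a c - dist_T V E lam b c) ` (V \<times> V \<times> V)"
      by (intro image_eqI[of _ _ "(a, b, c)"]) auto
  qed
  then have finD: "finite D" using fin by (meson finite_SigmaI finite_imageI finite_subset)
  have "d u v - d v v \<in> D" unfolding D_def d_def using e by blast
  moreover have "d v v = 0" using dist_self[OF nn e(4)] unfolding d_def .
  ultimately have "d u v \<in> {0<..} \<inter> D" using \<open>d u v > 0\<close> by auto
  then have "res' V E lam \<le> d u v" unfolding res'_def D_def[symmetric] using finD by (intro Min_le) auto
  then show ?thesis using \<open>d u v \<le> lam {u, v}\<close> by simp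
qed



theorem lemma20:
  fixes V :: "'a set" and E :: "'a set set" and lam :: "'a set \<Rightarrow> real"
    and k :: nat and U S :: "nat \<Rightarrow> 'a set" and \<delta> \<delta>' :: real
    and ord :: "'a \<Rightarrow> 'a list"
  assumes tree: "is_tree V E"
    and pos: "\<forall>e\<in>E. lam e > 0"
    and U_sub: "\<forall>i<k. U i \<subseteq> V" and S_sub: "\<forall>i<k. S i \<subseteq> V"
    and cover: "(\<Union>i<k. U i) = V"
    and disj: "\<forall>i<k. \<forall>j<k. i \<noteq> j \<longrightarrow> U i \<inter> U j = {}"
    and conn: "\<forall>i<k. induces_subtree V E (U i)"
    and n2: "2 \<le> card V"
    and \<delta>_pos: "0 < \<delta>"
    and \<delta>_small: "\<delta> < res' V E lam / (6 * real (card V))"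
    and \<delta>'_def: "\<delta>' = \<delta> / (4 * real (card V))"
    and ord: "valid_orders V E ord"
  shows "ggiv_yes V E lam k U S \<longleftrightarrow>
    ggiv_yes (V' E) (E' V E ord) (lam' E lam k U \<delta> \<delta>') k (\<lambda>i. U' E (U i)) (\<lambda>i. U' E (S i))"
proof -
  have fin: "finite V" and ok: "graph_edges_ok V E" and cg: "connected_graph V E"
    and cE: "card E = card V - 1" using tree unfolding is_tree_def by auto
  have EV: "E \<subseteq> Pow V" using ok unfolding graph_edges_ok_def by auto
  then have finE: "finite E" using fin by (meson finite_Pow_iff finite_subset)
  define n where "n = card V"
  have n2': "real n \<ge> 2" using n2 unfolding n_def by simp
  have nn: "\<forall>e\<in>E. lam e \<ge> 0" using pos by auto
  define LR where "LR = lamR lam k U \<delta>"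
  define L where "L = lam' E lam k U \<delta> \<delta>'"
  define d where "d = dist_T V E lam"
  define dR where "dR = dist_T V E LR"
  define d' where "d' = dist_T (V' E) (E' V E ord) L"
  have res_pos: "res' V E lam > 6 * real n * \<delta>"
    using \<delta>_small n2' unfolding n_def by (simp add: field_simps)
  have \<delta>_lam: "\<delta> < lam e" if eE: "e \<in> E" for e
  proof -
    obtain u v where uv: "u \<in> V" "v \<in> V" "u \<noteq> v" "e = {u, v}" using edge_form[OF ok eE] by metis
    have "res' V E lam \<le> lam e" using res'_le[OF fin cg pos, of u v] uv eE by simp
    moreover have "\<delta> < res' V E lam" using res_pos n2' \<delta>_pos
      by (smt (verit, best) mult_le_cancel_right1 of_nat_0_le_iff)
    ultimately show ?thesis by simp
  qed
  have LRpos: "\<forall>e\<in>E. LR e > 0" using \<delta>_lam pos unfolding LR_def lamR_def by auto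
  then have LRnn: "\<forall>e\<in>E. LR e \<ge> 0" by auto
  have \<delta>'_pos: "\<delta>' > 0" using \<delta>'_def \<delta>_pos n2' unfolding n_def by simp
  have Lnn: "\<forall>e\<in>E' V E ord. L e \<ge> 0"
  proof
    fix e assume "e \<in> E' V E ord"
    show "L e \<ge> 0"
    proof (cases "e \<in> cross_edges E")
      case True
      then obtain u v where uv: "e = {(u, v), (v, u)}" "{u, v} \<in> E" unfolding cross_edges_def by blast
      then have "fst ` e = {u, v}" using fst_pair2 by simp
      moreover have "LR {u, v} > 0" using LRpos uv(2) by blast
      ultimately show ?thesis using True unfolding L_def LR_def lam'_eq by simp
    next
      case False then show ?thesis using \<delta>'_pos unfolding L_def lam'_eq by simp
    qed
  qed
  have nbr: "set (ord x) \<noteq> {}" if xV: "x \<in> V" for x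
  proof -
    have "\<not> V \<subseteq> {x}"
    proof
      assume "V \<subseteq> {x}"
      then have "card V \<le> card {x}" by (intro card_mono) auto
      then show False using n2 by simp
    qed
    then obtain z where z: "z \<in> V" "z \<noteq> x" by blast
    obtain p where p: "walk V E p" "hd p = x" "last p = z" using cg xV z unfolding connected_graph_def by blast
    obtain w r where "p = x # w # r" using p z by (cases p; cases "tl p") auto
    then have "{x, w} \<in> E" using p by simp
    then show ?thesis using ord xV unfolding valid_orders_def by auto
  qed
  have sumb: "\<delta>' * (\<Sum>u\<in>set p. real (length (ord u))) \<le> \<delta> / 2" if sp: "set p \<subseteq> V" for p
  proof -
    have "(\<Sum>u\<in>set p. real (length (ord u))) \<le> (\<Sum>u\<in>V. real (length (ord u)))"
      using sp fin by (intro sum_mono2) auto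
    also have "\<dots> \<le> 2 * real (card E)" by (rule sum_deg[OF ok ord fin finE])
    also have "\<dots> = 2 * (real n - 1)" using cE n2 unfolding n_def by simp
    finally have "\<delta>' * (\<Sum>u\<in>set p. real (length (ord u))) \<le> \<delta>' * (2 * (real n - 1))"
      using \<delta>'_pos by (intro mult_left_mono) auto
    also have "\<dots> = \<delta> * (real n - 1) / (2 * real n)" using \<delta>'_def n2' unfolding n_def by (simp add: field_simps)
    also have "\<dots> \<le> \<delta> / 2" using n2' \<delta>_pos by (simp add: field_simps)
    finally show ?thesis .
  qed
  have UP: "d' (hd q, v) (last q, y) \<le> wl LR q + \<delta> / 2 \<and>
      (\<exists>p'. walk (V' E) (E' V E ord) p' \<and> hd p' = (hd q, v) \<and> last p' = (last q, y))"
    if q: "walk V E q" "distinct q" and vy: "v \<in> set (ord (hd q))" "y \<in> set (ord (last q))" for q v y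
  proof -
    obtain p' where p': "walk (V' E) (E' V E ord) p'" "hd p' = (hd q, v)" "last p' = (last q, y)"
      "wl L p' \<le> wl LR q + \<delta>' * (\<Sum>u\<in>set q. real (length (ord u)))"
      using lift[OF ok ord _ q vy, of \<delta>' lam k U \<delta>] \<delta>'_pos unfolding L_def LR_def by auto
    have "d' (hd q, v) (last q, y) \<le> wl L p'" using dist_le[OF Lnn p'(1)] p' unfolding d'_def by simp
    moreover have "set q \<subseteq> V" using q(1) unfolding walk_def by auto
    ultimately show ?thesis using sumb p' by fastforce
  qed
  have V'mem: "x \<in> V \<and> y \<in> set (ord x)" if "(x, y) \<in> V' E" for x y
  proof -
    have e: "{x, y} \<in> E" using that unfolding V'_def by simp
    obtain a b where "a \<in> V" "b \<in> V" "{x, y} = {a, b}" using edge_form[OF ok e] by metis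
    then have "x \<in> V" by (auto simp: doubleton_eq_iff)
    then show ?thesis using e ord unfolding valid_orders_def by auto
  qed
  have conn': "\<exists>p'. walk (V' E) (E' V E ord) p' \<and> hd p' = a' \<and> last p' = x'"
    if a': "a' \<in> V' E" and x': "x' \<in> V' E" for a' x'
  proof -
    obtain a v where av: "a' = (a, v)" by (cases a')
    obtain x y where xy: "x' = (x, y)" by (cases x')
    have m1: "a \<in> V" "v \<in> set (ord a)" using V'mem a' av by auto
    have m2: "x \<in> V" "y \<in> set (ord x)" using V'mem x' xy by auto
    obtain q where q: "walk V E q" "distinct q" "hd q = a" "last q = x"
      using dist_attain[OF fin cg nn m1(1) m2(1)] by blast
    show ?thesis using UP[OF q(1,2), of v y] q m1 m2 av xy by auto
  qed
  have dR_self: "dR a a = 0" if "a \<in> V" for a using dist_self[OF LRnn that] unfolding dR_def .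
  have LOW: "dR (fst a') (fst x') \<le> d' a' x'" if a': "a' \<in> V' E" and x': "x' \<in> V' E" for a' x'
  proof -
    have aV: "fst a' \<in> V" using V'mem a' by (cases a') auto
    show ?thesis unfolding d'_def
    proof (rule dist_ge)
      show "\<exists>p. walk (V' E) (E' V E ord) p \<and> hd p = a' \<and> last p = x'" using conn'[OF a' x'] .
      fix p assume p: "walk (V' E) (E' V E ord) p" "hd p = a'" "last p = x'"
      have lip: "(\<lambda>w. dR (fst a') (fst w)) w2 - (\<lambda>w. dR (fst a') (fst w)) w1 \<le> L {w1, w2}"
        if e: "{w1, w2} \<in> E' V E ord" for w1 w2
      proof (cases "{w1, w2} \<in> cross_edges E")
        case True
        then obtain u v where uv: "{w1, w2} = {(u, v), (v, u)}" "{u, v} \<in> E" unfolding cross_edges_def by blast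
        have Le: "L {w1, w2} = LR {u, v}" using True uv fst_pair2[of u v] unfolding L_def LR_def lam'_eq by simp
        obtain a b where ab: "a \<in> V" "b \<in> V" "{u, v} = {a, b}" using edge_form[OF ok uv(2)] by metis
        have uvV: "u \<in> V" "v \<in> V" using ab by (auto simp: doubleton_eq_iff)
        have t1: "dR (fst a') v \<le> dR (fst a') u + LR {u, v}"
          using dist_edge[OF fin cg LRnn aV uvV(1) uv(2) uvV(2)] unfolding dR_def .
        have t2: "dR (fst a') u \<le> dR (fst a') v + LR {u, v}"
          using dist_edge[OF fin cg LRnn aV uvV(2) _ uvV(1)] uv(2) unfolding dR_def by (simp add: insert_commute)
        have "(w1 = (u, v) \<and> w2 = (v, u)) \<or> (w1 = (v, u) \<and> w2 = (u, v))" using uv(1) by (simp add: doubleton_eq_iff)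
        then show ?thesis using t1 t2 Le by auto
      next
        case False
        then have "{w1, w2} \<in> path_edges V ord" using e unfolding E'_def by simp
        then obtain u i where "{w1, w2} = {(u, ord u ! i), (u, ord u ! Suc i)}" unfolding path_edges_def by blast
        then have "fst w1 = fst w2" by (auto simp: doubleton_eq_iff)
        moreover have "L {w1, w2} = \<delta>'" using False unfolding L_def lam'_eq by simp
        ultimately show ?thesis using \<delta>'_pos by simp
      qed
      have "(\<lambda>w. dR (fst a') (fst w)) (last p) - (\<lambda>w. dR (fst a') (fst w)) (hd p) \<le> wl L p"
        by (rule potential[where \<phi>="\<lambda>w. dR (fst a') (fst w)", OF p(1) lip])
      then show "dR (fst a') (fst x') \<le> wl L p" using p dR_self[OF aV] by simp
    qed
  qed
  have dR_ge: "dR a x \<ge> d a x - (real n - 1) * \<delta>" if ax: "a \<in> V" "x \<in> V" for a x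
  proof -
    obtain q where q: "walk V E q" "distinct q" "hd q = a" "last q = x" "dR a x = wl LR q"
      using dist_attain[OF fin cg LRnn ax] unfolding dR_def by blast
    have "set q \<subseteq> V" using q(1) unfolding walk_def by auto
    then have "length q \<le> n" using q(2) fin card_mono distinct_card unfolding n_def by metis
    moreover have "length q \<ge> 1" using q(1) by (cases q) auto
    ultimately have "real (length q - 1) \<le> real n - 1" by (simp add: of_nat_diff)
    then have "\<delta> * real (length q - 1) \<le> \<delta> * (real n - 1)" using \<delta>_pos by (intro mult_left_mono) auto
    moreover have "wl LR q \<ge> wl lam q - \<delta> * real (length q - 1)" using wl_LR_ge[where \<delta>=\<delta> and lam=lam and k=k and U=U and q=q] \<delta>_pos unfolding LR_def by simp
    moreover have "d a x \<le> wl lam q" using dist_le[OF nn q(1)] q unfolding d_def by simp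
    ultimately show ?thesis using q(5) by (simp add: algebra_simps)
  qed
  have dR_in: "dR a x \<ge> d a x" if m: "m < k" "a \<in> U m" "x \<in> U m" for a x m
  proof -
    have aV: "a \<in> V" "x \<in> V" using U_sub m by auto
    obtain q where q: "walk V E q" "distinct q" "hd q = a" "last q = x" "dR a x = wl LR q"
      using dist_attain[OF fin cg LRnn aV] unfolding dR_def by blast
    have "set q \<subseteq> U m" using stay[OF tree _ q(1,2)] conn m q by auto
    then have "wl LR q = wl lam q" using wl_LR_in[OF m(1)] unfolding LR_def by blast
    moreover have "d a x \<le> wl lam q" using dist_le[OF nn q(1)] q unfolding d_def by simp
    ultimately show ?thesis using q(5) by simp
  qed
  have cover': "\<exists>m<k. x \<in> U m" if "x \<in> V" for x using cover that by auto
  have d_nonneg: "d a x \<ge> 0" if ax: "a \<in> V" "x \<in> V" for a x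
  proof -
    obtain q where q: "walk V E q" "distinct q" "hd q = a" "last q = x" "d a x = wl lam q"
      using dist_attain[OF fin cg nn ax] unfolding d_def by blast
    then show ?thesis using wl_nonneg[OF nn q(1)] by simp
  qed
  have cellV: "cell V E lam (s i) (s ` {..<k}) = {x \<in> V. \<forall>j<k. d (s i) x \<le> d (s j) x}" for s :: "nat \<Rightarrow> 'a" and i
    unfolding cell_def d_def by auto
  have cellV': "cell (V' E) (E' V E ord) L (s i) (s ` {..<k}) = {x \<in> V' E. \<forall>j<k. d' (s i) x \<le> d' (s j) x}"
    for s :: "nat \<Rightarrow> 'a \<times> 'a" and i
    unfolding cell_def d'_def by auto
  have d'_nonneg: "d' a' x' \<ge> 0" if "a' \<in> V' E" "x' \<in> V' E" for a' x'
  proof -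
    have "fst a' \<in> V" "fst x' \<in> V" using V'mem that by (cases a', cases x', auto)+
    then have "dR (fst a') (fst x') \<ge> 0"
      using dist_attain[OF fin cg LRnn] wl_nonneg[OF LRnn] unfolding dR_def by metis
    then show ?thesis using LOW[OF that] by simp
  qed
  have d'_self: "d' a' a' \<le> 0" if "a' \<in> V' E" for a'
    using dist_le[OF Lnn, of "V' E" "[a']"] that unfolding d'_def by simp
  show ?thesis
  proof
    assume "ggiv_yes V E lam k U S"
    then obtain s where s: "\<forall>i<k. s i \<in> S i \<and> U i = cell V E lam (s i) (s ` {..<k})"
      unfolding ggiv_yes_def by blast
    have sV: "s i \<in> V" if "i < k" for i using s S_sub that by auto
    define s' where "s' i = (s i, hd (ord (s i)))" for i
    have hdo: "hd (ord (s i)) \<in> set (ord (s i))" if "i < k" for i using nbr[OF sV[OF that]] by simp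
    have Uc: "U i = {x \<in> V. \<forall>j<k. d (s i) x \<le> d (s j) x}" if "i < k" for i
      using s that cellV by auto
    have K: "d' (s' m) x' < d' (s' j) x'"
      if x': "x' \<in> U' E (U m)" and mj: "m < k" "j < k" "j \<noteq> m" for x' m j
    proof -
      obtain x y where xy: "x' = (x, y)" by (cases x')
      have xm: "x \<in> U m" and e: "{x, y} \<in> E" using x' xy unfolding U'_def by auto
      have x'V: "x' \<in> V' E" using e xy unfolding V'_def by simp
      have xV: "x \<in> V" "y \<in> set (ord x)" using V'mem x'V xy by auto
      have le: "d (s m) x \<le> d (s j) x" using Uc[OF mj(1)] xm mj(2) by auto
      have "x \<notin> U j" using disj mj xm by blast
      then obtain l where l: "l < k" "d (s l) x < d (s j) x" using Uc[OF mj(2)] xV by auto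
      have "d (s m) x \<le> d (s l) x" using Uc[OF mj(1)] xm l by auto
      then have gap: "d (s j) x - d (s m) x > 0" using l by simp
      have "d (s j) x - d (s m) x \<in> {0<..} \<inter> {dist_T V E lam v u - dist_T V E lam v' u | v v' u. v \<in> V \<and> v' \<in> V \<and> u \<in> V}"
        using gap sV[OF mj(2)] sV[OF mj(1)] xV unfolding d_def by blast
      moreover have "finite {dist_T V E lam v u - dist_T V E lam v' u | v v' u. v \<in> V \<and> v' \<in> V \<and> u \<in> V}"
      proof -
        have "{dist_T V E lam v u - dist_T V E lam v' u | v v' u. v \<in> V \<and> v' \<in> V \<and> u \<in> V}
          \<subseteq> (\<lambda>(a, b, c). dist_T V E lam a c - dist_T V E lam b c) ` (V \<times> V \<times> V)"
        proof
          fix z assume "z \<in> {dist_T V E lam v u - dist_T V E lam v' u | v v' u. v \<in> V \<and> v' \<in> V \<and> u \<in> V}"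
          then obtain a b c where "z = dist_T V E lam a c - dist_T V E lam b c" "a \<in> V" "b \<in> V" "c \<in> V"
            by blast
          then show "z \<in> (\<lambda>(a, b, c). dist_T V E lam a c - dist_T V E lam b c) ` (V \<times> V \<times> V)"
            by (intro image_eqI[of _ _ "(a, b, c)"]) auto
        qed
        then show ?thesis using fin by (meson finite_SigmaI finite_imageI finite_subset)
      qed
      ultimately have res: "res' V E lam \<le> d (s j) x - d (s m) x" unfolding res'_def by (intro Min_le) auto
      obtain q where q: "walk V E q" "distinct q" "hd q = s m" "last q = x" "d (s m) x = wl lam q"
        using dist_attain[OF fin cg nn sV[OF mj(1)] xV(1)] unfolding d_def by blast
      have "d' (s' m) x' \<le> wl LR q + \<delta> / 2"
        using UP[OF q(1,2), of "hd (ord (s m))" y] q hdo[OF mj(1)] xV xy unfolding s'_def by auto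
      moreover have "wl LR q \<le> wl lam q" unfolding LR_def by (rule wl_LR_le) (use \<delta>_pos in simp)
      moreover have "dR (s j) x \<le> d' (s' j) x'"
        using LOW[of "s' j" x'] x'V hdo[OF mj(2)] sV[OF mj(2)] xy unfolding s'_def V'_def
        using ord unfolding valid_orders_def by auto
      moreover have "dR (s j) x \<ge> d (s j) x - (real n - 1) * \<delta>" using dR_ge sV[OF mj(2)] xV by auto
      moreover have "(real n - 1) * \<delta> + \<delta> / 2 < 6 * real n * \<delta>"
      proof -
        have "0 \<le> \<delta> * (real n * 5)" using n2' \<delta>_pos by simp
        moreover have "(real n - 1) * \<delta> + \<delta> / 2 = 6 * real n * \<delta> - (\<delta> / 2 + \<delta> * (real n * 5))"
          by (simp add: algebra_simps)
        ultimately show ?thesis using \<delta>_pos by linarith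
      qed
      ultimately show ?thesis using res res_pos q(5) by linarith
    qed
    have U'V: "U' E (U i) \<subseteq> V' E" for i unfolding U'_def V'_def by auto
    show "ggiv_yes (V' E) (E' V E ord) (lam' E lam k U \<delta> \<delta>') k (\<lambda>i. U' E (U i)) (\<lambda>i. U' E (S i))"
      unfolding ggiv_yes_def L_def[symmetric]
    proof (intro exI[of _ s'] allI impI conjI)
      fix i assume i: "i < k"
      show "s' i \<in> U' E (S i)" using s i hdo[OF i] sV[OF i] ord unfolding s'_def U'_def valid_orders_def by auto
      have "U' E (U i) = {x \<in> V' E. \<forall>j<k. d' (s' i) x \<le> d' (s' j) x}"
      proof (rule cell_key[where W="\<lambda>i. U' E (U i)"])
        show "\<forall>x\<in>V' E. \<exists>m<k. x \<in> U' E (U m)"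
        proof
          fix x' assume x': "x' \<in> V' E"
          obtain x y where xy: "x' = (x, y)" by (cases x')
          obtain m where "m < k" "x \<in> U m" using cover' V'mem x' xy by blast
          then show "\<exists>m<k. x' \<in> U' E (U m)" using x' xy unfolding U'_def V'_def by auto
        qed
        show "\<forall>i<k. U' E (U i) \<subseteq> V' E" using U'V by auto
        show "\<forall>i<k. \<forall>j<k. i \<noteq> j \<longrightarrow> U' E (U i) \<inter> U' E (U j) = {}"
          using disj unfolding U'_def by blast
      qed (use K i in auto)
      then show "U' E (U i) = cell (V' E) (E' V E ord) L (s' i) (s' ` {..<k})" using cellV' by simp
    qed
  next
    assume "ggiv_yes (V' E) (E' V E ord) (lam' E lam k U \<delta> \<delta>') k (\<lambda>i. U' E (U i)) (\<lambda>i. U' E (S i))"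
    then obtain s' where s': "\<forall>i<k. s' i \<in> U' E (S i) \<and> U' E (U i) = cell (V' E) (E' V E ord) L (s' i) (s' ` {..<k})"
      unfolding ggiv_yes_def L_def[symmetric] by blast
    define s where "s i = fst (s' i)" for i
    have Uc': "U' E (U i) = {x \<in> V' E. \<forall>j<k. d' (s' i) x \<le> d' (s' j) x}" if "i < k" for i
      using s' that cellV' by auto
    have s'V: "s' i \<in> V' E" "s i \<in> S i" if "i < k" for i
      using s' that unfolding U'_def V'_def s_def by auto
    have sU: "s i \<in> U i" if i: "i < k" for i
    proof -
      have "\<forall>j<k. d' (s' i) (s' i) \<le> d' (s' j) (s' i)"
        using d'_self[OF s'V(1)[OF i]] d'_nonneg s'V(1)[OF i] s'V(1) by (meson order_trans)
      then have "s' i \<in> U' E (U i)" using Uc'[OF i] s'V[OF i] by auto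
      then show ?thesis unfolding U'_def s_def by auto
    qed
    have sV: "s i \<in> V" if "i < k" for i using s'V that S_sub by auto
    have K2: "d (s m) x < d (s j) x" if x: "x \<in> U m" and mj: "m < k" "j < k" "j \<noteq> m" for x m j
    proof -
      have xV: "x \<in> V" using U_sub x mj by auto
      define y where "y = hd (ord x)"
      have y: "y \<in> set (ord x)" using nbr[OF xV] unfolding y_def by simp
      have e: "{x, y} \<in> E" using ord xV y unfolding valid_orders_def by auto
      have x'U: "(x, y) \<in> U' E (U m)" using x e unfolding U'_def by simp
      then have le: "d' (s' m) (x, y) \<le> d' (s' j) (x, y)" using Uc'[OF mj(1)] mj by auto
      have x'V: "(x, y) \<in> V' E" using e unfolding V'_def by simp
      have "dR (s m) x \<le> d' (s' m) (x, y)" using LOW[OF s'V(1)[OF mj(1)] x'V] unfolding s_def by simp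
      moreover have "d (s m) x \<le> dR (s m) x" using dR_in[OF mj(1) sU[OF mj(1)] x] .
      moreover obtain q where q: "walk V E q" "distinct q" "hd q = s j" "last q = x" "d (s j) x = wl lam q"
        using dist_attain[OF fin cg nn sV[OF mj(2)] xV] unfolding d_def by blast
      moreover have "d' (s' j) (x, y) \<le> wl LR q + \<delta> / 2"
      proof -
        obtain a v where av: "s' j = (a, v)" by (cases "s' j")
        have "a = s j" using av unfolding s_def by simp
        moreover have "v \<in> set (ord a)" using V'mem s'V(1)[OF mj(2)] av by auto
        ultimately show ?thesis using UP[OF q(1,2), of v y] q y av by auto
      qed
      moreover have "wl LR q \<le> wl lam q - \<delta>"
      proof -
        have "x \<notin> U j" using disj mj x by blast
        then show ?thesis using wl_LR_cross[of \<delta> j k U q lam] \<delta>_pos mj disj sU[OF mj(2)] q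
          unfolding LR_def by (cases q) auto
      qed
      ultimately show ?thesis using le \<delta>_pos by linarith
    qed
    show "ggiv_yes V E lam k U S" unfolding ggiv_yes_def
    proof (intro exI[of _ s] allI impI conjI)
      fix i assume i: "i < k"
      show "s i \<in> S i" using s'V(2)[OF i] .
      have "U i = {x \<in> V. \<forall>j<k. d (s i) x \<le> d (s j) x}"
      proof (rule cell_key[where W=U])
        show "\<forall>x\<in>V. \<exists>m<k. x \<in> U m" using cover' by auto
        show "\<forall>i<k. U i \<subseteq> V" using U_sub by auto
        show "\<forall>i<k. \<forall>j<k. i \<noteq> j \<longrightarrow> U i \<inter> U j = {}" using disj by auto
      qed (use K2 i in auto)
      then show "U i = cell V E lam (s i) (s ` {..<k})" using cellV by simp
    qed
  qed
qed

end
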